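(* Let $k\geq 2$ and let $G$ be a graph of order $n$ containing no cycle of length $2k+1$. Then for every vertex $w$ of $G$ with $d_w\geq 1$, \[ d_{w}+\frac{1}{d_{w}}\sum_{u\in\Gamma_{w}}d_{u}\leq n+2k-2. \]
   Context: All graphs are finite and simple. $\Gamma_w$ is the set of neighbors of $w$ and $d_w=|\Gamma_w|$ its degree. *)

theory Defs
  imports Complex_Main
begin

definition simple_graph :: "'a set \<Rightarrow> ('a \<Rightarrow> 'a \<Rightarrow> bool) \<Rightarrow> bool" where
  "simple_graph V E \<longleftrightarrow> finite V \<and> (\<forall>x y. E x y \<longrightarrow> x \<in> V \<and> y \<in> V)
     \<and> (\<forall>x y. E x y \<longrightarrow> E y x) \<and> (\<forall>x. \<not> E x x)"

definition neighbors :: "'a set \<Rightarrow> ('a \<Rightarrow> 'a \<Rightarrow> bool) \<Rightarrow> 'a \<Rightarrow> 'a set" where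
  "neighbors V E w = {u \<in> V. E w u}"

definition degree :: "'a set \<Rightarrow> ('a \<Rightarrow> 'a \<Rightarrow> bool) \<Rightarrow> 'a \<Rightarrow> nat" where
  "degree V E w = card (neighbors V E w)"

definition has_cycle_of_length :: "'a set \<Rightarrow> ('a \<Rightarrow> 'a \<Rightarrow> bool) \<Rightarrow> nat \<Rightarrow> bool" where
  "has_cycle_of_length V E L \<longleftrightarrow> L \<ge> 3 \<and> (\<exists>vs. length vs = L \<and> distinct vs \<and> set vs \<subseteq> V
     \<and> (\<forall>i<L. E (vs ! i) (vs ! ((i + 1) mod L))))"

end

theory Submission
  imports Defs
begin

fun walk :: "('a \<Rightarrow> 'a \<Rightarrow> bool) \<Rightarrow> 'a list \<Rightarrow> bool" where
  "walk E [] = True"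
| "walk E [x] = True"
| "walk E (x # y # xs) = (E x y \<and> walk E (y # xs))"

lemma walk_Cons: "walk E (x # xs) \<longleftrightarrow> (xs = [] \<or> (E x (hd xs) \<and> walk E xs))"
  by (cases xs) auto

lemma walk_append:
  "xs \<noteq> [] \<Longrightarrow> ys \<noteq> [] \<Longrightarrow> walk E (xs @ ys) \<longleftrightarrow> walk E xs \<and> walk E ys \<and> E (last xs) (hd ys)"
proof (induction xs)
  case Nil then show ?case by simp
next
  case (Cons a xs)
  show ?case
  proof (cases "xs = []")
    case True then show ?thesis using Cons by (auto simp add: walk_Cons)
  next
    case False then show ?thesis using Cons by (auto simp: walk_Cons)
  qed
qed

lemma walk_nth: "walk E xs \<longleftrightarrow> (\<forall>i. Suc i < length xs \<longrightarrow> E (xs ! i) (xs ! Suc i))"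
proof (induction E xs rule: walk.induct)
  case (3 E x y xs)
  show ?case
  proof
    assume "walk E (x # y # xs)"
    then show "\<forall>i. Suc i < length (x # y # xs) \<longrightarrow> E ((x # y # xs) ! i) ((x # y # xs) ! Suc i)"
      using 3 by (auto simp: less_Suc_eq_0_disj)
  next
    assume h: "\<forall>i. Suc i < length (x # y # xs) \<longrightarrow> E ((x # y # xs) ! i) ((x # y # xs) ! Suc i)"
    have "E x y" using h[rule_format, of 0] by simp
    moreover have "walk E (y # xs)" unfolding 3
    proof (intro allI impI)
      fix i assume "Suc i < length (y # xs)"
      then show "E ((y # xs) ! i) ((y # xs) ! Suc i)" using h[rule_format, of "Suc i"] by simp
    qed
    ultimately show "walk E (x # y # xs)" by simp
  qed
qed auto

lemma walk_take: "walk E xs \<Longrightarrow> walk E (take n xs)"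
  by (simp add: walk_nth)

lemma walk_drop: "walk E xs \<Longrightarrow> walk E (drop n xs)"
  by (auto simp: walk_nth)

lemma walk_rev:
  assumes sym: "\<forall>a b. E a b \<longrightarrow> E b a"
  shows "walk E xs \<Longrightarrow> walk E (rev xs)"
proof (induction xs)
  case (Cons a xs)
  show ?case
  proof (cases "xs = []")
    case True then show ?thesis by simp
  next
    case False
    then show ?thesis using Cons sym by (auto simp: walk_Cons walk_append last_rev)
  qed
qed simp

lemma cyc_rotate1:
  assumes sym: "\<forall>a b. E a b \<longrightarrow> E b a"
    and "cs \<noteq> []" "walk E cs" "E (last cs) (hd cs)"
  shows "walk E (rotate1 cs) \<and> E (last (rotate1 cs)) (hd (rotate1 cs))"
proof -
  obtain x xs where cs: "cs = x # xs" using assms(2) by (cases cs) auto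
  show ?thesis
  proof (cases "xs = []")
    case True then show ?thesis using cs assms by simp
  next
    case False
    then show ?thesis using cs assms by (auto simp: walk_Cons walk_append)
  qed
qed

lemma cyc_rotate:
  assumes sym: "\<forall>a b. E a b \<longrightarrow> E b a"
    and "cs \<noteq> []" "walk E cs" "E (last cs) (hd cs)"
  shows "walk E (rotate n cs) \<and> E (last (rotate n cs)) (hd (rotate n cs))"
proof (induction n)
  case 0 then show ?case using assms by simp
next
  case (Suc n)
  have "rotate n cs \<noteq> []" using assms(2) by simp
  then show ?case using cyc_rotate1[OF sym _ conjunct1[OF Suc] conjunct2[OF Suc]]
    by (simp add: rotate_Suc)
qed

lemma deg_bound:
  fixes S :: "'a set" and E :: "'a \<Rightarrow> 'a \<Rightarrow> bool"
  assumes fin: "finite S" and sym: "\<forall>a b. E a b \<longrightarrow> E b a" and irr: "\<forall>a. \<not> E a a"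
    and k1: "k \<ge> 1"
    and mindeg: "\<forall>y\<in>S. k \<le> card {z\<in>S. E y z}"
    and nopath: "\<forall>P. distinct P \<and> set P \<subseteq> S \<and> walk E P \<longrightarrow> length P < 2*k"
    and xS: "x \<in> S"
  shows "card {z\<in>S. E x z} \<le> 2*k - 2"
proof -
  define Ps where "Ps = {P. distinct P \<and> set P \<subseteq> S \<and> walk E P \<and> x \<in> set P}"
  have xPs: "[x] \<in> Ps" using xS by (simp add: Ps_def)
  have bnd: "length P \<le> card S" if "P \<in> Ps" for P
  proof -
    have "length P = card (set P)" using that by (simp add: Ps_def distinct_card)
    also have "\<dots> \<le> card S" using that fin by (intro card_mono) (auto simp: Ps_def)
    finally show ?thesis .
  qed
  have fin_len: "finite (length ` Ps)"
    by (rule finite_subset[of _ "{..card S}"]) (auto dest: bnd)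
  have "Max (length ` Ps) \<in> length ` Ps" using fin_len xPs by (intro Max_in) auto
  then obtain P where P: "P \<in> Ps" "length P = Max (length ` Ps)" by auto
  have maxP: "length Q \<le> length P" if "Q \<in> Ps" for Q
    using P(2) fin_len that by simp
  have Pd: "distinct P" and PS: "set P \<subseteq> S" and Pw: "walk E P" and xP: "x \<in> set P"
    using P(1) by (auto simp: Ps_def)
  have Pne: "P \<noteq> []" using xP by auto
  have Lsmall: "length P < 2*k" using nopath Pd PS Pw by blast
  have hd_closed: "z \<in> set P" if "z \<in> S" "E (hd P) z" for z
  proof (rule ccontr)
    assume "z \<notin> set P"
    then have "z # P \<in> Ps" using that Pd PS Pw xP Pne sym by (auto simp: Ps_def walk_Cons)
    from maxP[OF this] show False by simp
  qed
  have last_closed: "z \<in> set P" if "z \<in> S" "E (last P) z" for z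
  proof (rule ccontr)
    assume "z \<notin> set P"
    then have "P @ [z] \<in> Ps" using that Pd PS Pw xP Pne sym by (auto simp: Ps_def walk_append)
    from maxP[OF this] show False by simp
  qed
  have "card {z\<in>S. E x z} \<ge> 1" using mindeg xS k1 by fastforce
  then obtain z0 where z0: "z0 \<in> S" "E x z0"
    by (metis (no_types, lifting) One_nat_def card.empty empty_Collect_eq not_one_le_zero)
  have L2: "length P \<ge> 2"
  proof (rule ccontr)
    assume "\<not> length P \<ge> 2"
    then have "length P = 1" using Pne by (cases P) (auto simp: Suc_le_eq)
    then have "P = [x]" using xP by (cases P) auto
    then show False using hd_closed[OF z0(1)] z0(2) irr by auto
  qed
  define p where "p = length P - 1"
  have p1: "p \<ge> 1" "Suc p = length P" using L2 by (auto simp: p_def)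
  define A where "A = {i. i<p \<and> E (P!0) (P!Suc i)}"
  define B where "B = {i. i<p \<and> E (P!p) (P!i)}"
  have finA: "finite A" and finB: "finite B" by (auto simp: A_def B_def)
  have hdP: "hd P = P!0" using Pne by (simp add: hd_conv_nth)
  have lastP: "last P = P!p" using Pne by (simp add: last_conv_nth p_def)
  have cardA: "k \<le> card A"
  proof -
    have "{z\<in>S. E (hd P) z} \<subseteq> (\<lambda>i. P!Suc i) ` A"
    proof
      fix z assume z: "z \<in> {z\<in>S. E (hd P) z}"
      then have "z \<in> set P" using hd_closed by auto
      then obtain j where j: "j < length P" "P!j = z" by (auto simp: in_set_conv_nth)
      have "j \<noteq> 0" using j z irr hdP by (metis (no_types, lifting) mem_Collect_eq)
      then obtain i where "j = Suc i" by (cases j) auto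
      then show "z \<in> (\<lambda>i. P!Suc i) ` A" using j z p1 hdP by (auto simp: A_def)
    qed
    then have "card {z\<in>S. E (hd P) z} \<le> card A"
      using finA by (meson card_image_le card_mono dual_order.trans finite_imageI)
    moreover have "hd P \<in> S" using PS Pne by auto
    ultimately show ?thesis using mindeg by fastforce
  qed
  have cardB: "k \<le> card B"
  proof -
    have "{z\<in>S. E (last P) z} \<subseteq> (\<lambda>i. P!i) ` B"
    proof
      fix z assume z: "z \<in> {z\<in>S. E (last P) z}"
      then have "z \<in> set P" using last_closed by auto
      then obtain j where j: "j < length P" "P!j = z" by (auto simp: in_set_conv_nth)
      have "j \<noteq> p" using j z irr lastP by auto
      then have "j < p" using j p1 by auto
      then show "z \<in> (\<lambda>i. P!i) ` B" using j z lastP by (auto simp: B_def)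
    qed
    then have "card {z\<in>S. E (last P) z} \<le> card B"
      using finB by (meson card_image_le card_mono dual_order.trans finite_imageI)
    moreover have "last P \<in> S" using PS Pne by auto
    ultimately show ?thesis using mindeg by fastforce
  qed
  have "A \<inter> B \<noteq> {}"
  proof
    assume e: "A \<inter> B = {}"
    have "card (A \<union> B) \<le> p"
      by (rule order_trans[OF card_mono[of "{..<p}"]]) (auto simp: A_def B_def)
    moreover have "card A + card B = card (A \<union> B)" using card_Un_Int[OF finA finB] e by simp
    ultimately show False using cardA cardB Lsmall p1 by linarith
  qed
  then obtain i where iA: "i \<in> A" and iB: "i \<in> B" by auto
  have ip: "i < p" using iA by (simp add: A_def)
  define cs where "cs = take (Suc i) P @ rev (drop (Suc i) P)"
  have set_cs: "set cs = set P"
  proof -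
    have "set cs = set (take (Suc i) P) \<union> set (drop (Suc i) P)" by (simp add: cs_def)
    also have "\<dots> = set (take (Suc i) P @ drop (Suc i) P)" by (simp only: set_append)
    finally show ?thesis by simp
  qed
  have dist_cs: "distinct cs"
  proof -
    have "distinct (take (Suc i) P @ drop (Suc i) P)" using Pd by simp
    then show ?thesis unfolding cs_def distinct_append by simp
  qed
  have len_cs: "length cs = length P" using p1 ip by (simp add: cs_def)
  have tne: "take (Suc i) P \<noteq> []" using Pne by simp
  have dne: "drop (Suc i) P \<noteq> []" using p1 ip by simp
  have lt: "last (take (Suc i) P) = P!i" using p1 ip by (subst last_conv_nth) (use tne in auto)
  have ld: "last (drop (Suc i) P) = P!p" using dne lastP by simp
  have hdd: "hd (drop (Suc i) P) = P!Suc i" using p1 ip by (simp add: hd_drop_conv_nth)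
  have walk_cs: "walk E cs"
    unfolding cs_def using tne dne walk_take[OF Pw] walk_rev[OF sym walk_drop[OF Pw]] lt ld iB sym
    by (simp add: walk_append hd_rev B_def)
  have wrap_cs: "E (last cs) (hd cs)"
    unfolding cs_def using tne dne hdd iA sym hdP by (simp add: last_rev A_def hd_append)
  have cs_ne: "cs \<noteq> []" using tne by (simp add: cs_def)
  have closed: "z \<in> set P" if y: "y \<in> set P" and z: "z \<in> S" "E y z" for y z
  proof (rule ccontr)
    assume zn: "z \<notin> set P"
    obtain j where j: "j < length cs" "cs!j = y" using y set_cs by (metis in_set_conv_nth)
    define R where "R = rotate j cs"
    have hdR: "hd R = y" using j cs_ne by (simp add: R_def hd_rotate_conv_nth)
    have "walk E R" using cyc_rotate[OF sym cs_ne walk_cs wrap_cs] by (simp add: R_def)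
    moreover have "set R = set P" "distinct R" "length R = length P" "R \<noteq> []"
      using set_cs dist_cs len_cs cs_ne by (auto simp: R_def)
    ultimately have "z # R \<in> Ps" using zn z hdR sym PS xP by (auto simp: Ps_def walk_Cons)
    from maxP[OF this] show False using \<open>length R = length P\<close> by simp
  qed
  have "{z\<in>S. E x z} \<subseteq> set P - {x}" using closed xP irr by auto
  then have "card {z\<in>S. E x z} \<le> card (set P - {x})" by (intro card_mono) auto
  also have "\<dots> = length P - 1" using xP Pd by (simp add: distinct_card)
  finally show ?thesis using Lsmall by linarith
qed

lemma EG:
  fixes S :: "'a set" and E :: "'a \<Rightarrow> 'a \<Rightarrow> bool"
  assumes fin: "finite S" and sym: "\<forall>a b. E a b \<longrightarrow> E b a" and irr: "\<forall>a. \<not> E a a"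
    and k1: "k \<ge> 1"
    and nopath: "\<forall>P. distinct P \<and> set P \<subseteq> S \<and> walk E P \<longrightarrow> length P < 2*k"
  shows "card {(a,b). a\<in>S \<and> b\<in>S \<and> E a b} \<le> (2*k-2) * card S"
  using fin nopath
proof (induction S rule: finite_psubset_induct)
  case (psubset S)
  show ?case
  proof (cases "\<exists>x\<in>S. card {z\<in>S. E x z} < k")
    case True
    then obtain x where xS: "x \<in> S" and dx: "card {z\<in>S. E x z} < k" by auto
    define S' where "S' = S - {x}"
    have "S' \<subset> S" using xS by (auto simp: S'_def)
    moreover have "\<forall>P. distinct P \<and> set P \<subseteq> S' \<and> walk E P \<longrightarrow> length P < 2*k"
      using psubset.prems by (auto simp: S'_def)
    ultimately have IH: "card {(a,b). a\<in>S' \<and> b\<in>S' \<and> E a b} \<le> (2*k-2) * card S'"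
      using psubset.IH by blast
    let ?N = "{z\<in>S. E x z}"
    have sub: "{(a,b). a\<in>S \<and> b\<in>S \<and> E a b} \<subseteq>
      {(a,b). a\<in>S' \<and> b\<in>S' \<and> E a b} \<union> ({x} \<times> ?N) \<union> ((\<lambda>z. (z,x)) ` ?N)"
      using sym by (auto simp: S'_def)
    have fS': "finite S'" using psubset.hyps by (simp add: S'_def)
    have f1: "finite {(a,b). a\<in>S' \<and> b\<in>S' \<and> E a b}"
      by (rule finite_subset[of _ "S' \<times> S'"]) (use fS' in auto)
    have fN: "finite ?N" using psubset.hyps by simp
    have "card {(a,b). a\<in>S \<and> b\<in>S \<and> E a b} \<le>
      card ({(a,b). a\<in>S' \<and> b\<in>S' \<and> E a b} \<union> ({x} \<times> ?N) \<union> ((\<lambda>z. (z,x)) ` ?N))"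
      by (rule card_mono[OF _ sub]) (use f1 fN in auto)
    also have "\<dots> \<le> card {(a,b). a\<in>S' \<and> b\<in>S' \<and> E a b} + card ({x} \<times> ?N) + card ((\<lambda>z. (z,x)) ` ?N)"
      by (meson add_le_mono card_Un_le le_refl order_trans)
    also have "\<dots> \<le> (2*k-2) * card S' + card ?N + card ?N"
      using IH card_image_le[OF fN, of "\<lambda>z. (z,x)"] by (simp add: card_cartesian_product)
    also have "\<dots> \<le> (2*k-2) * card S' + (2*k-2)" using dx by linarith
    also have "\<dots> = (2*k-2) * card S"
    proof -
      have "card S > 0" using xS psubset.hyps card_gt_0_iff by blast
      then have "card S = Suc (card S')" using xS psubset.hyps by (simp add: S'_def)
      then show ?thesis by simp
    qed
    finally show ?thesis .
  next
    case False
    then have md: "\<forall>y\<in>S. k \<le> card {z\<in>S. E y z}" by (auto simp: not_less)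
    have eq: "{(a,b). a\<in>S \<and> b\<in>S \<and> E a b} = Sigma S (\<lambda>a. {b\<in>S. E a b})" by auto
    have "card {(a,b). a\<in>S \<and> b\<in>S \<and> E a b} = (\<Sum>a\<in>S. card {b\<in>S. E a b})"
      unfolding eq using psubset.hyps by (subst card_SigmaI) auto
    also have "\<dots> \<le> (\<Sum>a\<in>S. 2*k-2)"
      by (rule sum_mono, rule deg_bound[OF psubset.hyps sym irr k1 md psubset.prems])
    also have "\<dots> = (2*k-2) * card S" by simp
    finally show ?thesis .
  qed
qed

theorem mainTheorem9:
  fixes V :: "'a set" and E :: "'a \<Rightarrow> 'a \<Rightarrow> bool" and k :: nat and w :: 'a
  assumes "simple_graph V E"
    and "k \<ge> 2"
    and "\<not> has_cycle_of_length V E (2 * k + 1)"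
    and "w \<in> V"
    and "degree V E w \<ge> 1"
  shows "real (degree V E w) + (\<Sum>u\<in>neighbors V E w. real (degree V E u)) / real (degree V E w)
           \<le> real (card V) + 2 * real k - 2"
proof -
  have finV: "finite V" and inV: "\<forall>x y. E x y \<longrightarrow> x \<in> V \<and> y \<in> V"
    and sym: "\<forall>a b. E a b \<longrightarrow> E b a" and irr: "\<forall>a. \<not> E a a"
    using assms(1) by (auto simp: simple_graph_def)
  define N where "N = neighbors V E w"
  define d where "d = degree V E w"
  have dN: "d = card N" by (simp add: d_def N_def degree_def)
  have Nsub: "N \<subseteq> V" and wN: "w \<notin> N" using irr by (auto simp: N_def neighbors_def)
  have finN: "finite N" using finV Nsub finite_subset by blast
  have nopath: "\<forall>P. distinct P \<and> set P \<subseteq> N \<and> walk E P \<longrightarrow> length P < 2*k"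
  proof (intro allI impI, rule ccontr)
    fix P assume P: "distinct P \<and> set P \<subseteq> N \<and> walk E P" and "\<not> length P < 2*k"
    define Q where "Q = take (2*k) P"
    have lQ: "length Q = 2*k" using \<open>\<not> length P < 2*k\<close> by (simp add: Q_def)
    have Qd: "distinct Q" and QN: "set Q \<subseteq> N" and Qw: "walk E Q"
      using P set_take_subset[of "2*k" P] by (auto simp: Q_def intro: walk_take)
    define vs where "vs = w # Q"
    have "has_cycle_of_length V E (2 * k + 1)"
      unfolding has_cycle_of_length_def
    proof (intro conjI exI)
      show "3 \<le> 2*k+1" using assms(2) by simp
      show "length vs = 2*k+1" using lQ by (simp add: vs_def)
      show "distinct vs" using Qd QN wN by (auto simp: vs_def)
      show "set vs \<subseteq> V" using QN Nsub assms(4) by (auto simp: vs_def)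
      show "\<forall>i<2*k+1. E (vs ! i) (vs ! ((i + 1) mod (2*k+1)))"
      proof (intro allI impI)
        fix i assume i: "i < 2*k+1"
        show "E (vs ! i) (vs ! ((i + 1) mod (2*k+1)))"
        proof (cases "i = 2*k")
          case True
          have "Q ! (2*k-1) \<in> N" using QN lQ assms(2) by (metis diff_less nth_mem subsetD
              less_numeral_extra(1) mult_pos_pos pos2 le_less_trans one_le_numeral zero_less_one
              \<open>k\<ge>2\<close> less_le_trans)
          then have "E (Q ! (2*k-1)) w" using sym by (auto simp: N_def neighbors_def)
          moreover have "vs ! i = Q ! (2*k-1)" using True assms(2)
            by (cases "2*k") (auto simp: vs_def)
          ultimately show ?thesis using True by (simp add: vs_def)
        next
          case False
          then have m: "(i+1) mod (2*k+1) = i+1" using i by simp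
          show ?thesis
          proof (cases i)
            case 0
            have "Q ! 0 \<in> N" using QN lQ assms(2) by (auto intro!: nth_mem)
            then show ?thesis using m 0 by (simp add: vs_def N_def neighbors_def)
          next
            case (Suc j)
            then have "Suc j < length Q" using i False lQ by simp
            then show ?thesis using Qw m Suc by (simp add: vs_def walk_nth)
          qed
        qed
      qed
    qed
    then show False using assms(3) by simp
  qed
  have EGN: "card {(a,b). a\<in>N \<and> b\<in>N \<and> E a b} \<le> (2*k-2) * d"
    using EG[OF finN sym irr _ nopath] assms(2) dN by simp
  have eq: "{(a,b). a\<in>N \<and> b\<in>N \<and> E a b} = Sigma N (\<lambda>a. {b\<in>N. E a b})" by auto
  have sumN: "(\<Sum>a\<in>N. card {b\<in>N. E a b}) \<le> (2*k-2) * d"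
    using EGN unfolding eq using finN by (subst (asm) card_SigmaI) auto
  define R where "R = V - insert w N"
  have cR: "card R = card V - Suc d"
    using Nsub assms(4) wN finN dN by (simp add: R_def card_Diff_subset)
  have cV: "Suc d \<le> card V"
    using Nsub assms(4) wN finN dN finV by (metis card_insert_disjoint card_mono insert_subset)
  have degu: "degree V E u \<le> 1 + card {b\<in>N. E u b} + card R" if "u \<in> N" for u
  proof -
    have "{v\<in>V. E u v} \<subseteq> {w} \<union> {b\<in>N. E u b} \<union> R" by (auto simp: R_def)
    then have "card {v\<in>V. E u v} \<le> card ({w} \<union> {b\<in>N. E u b} \<union> R)"
      using finV finN by (intro card_mono) (auto simp: R_def)
    also have "\<dots> \<le> card ({w} \<union> {b\<in>N. E u b}) + card R" by (rule card_Un_le)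
    also have "\<dots> \<le> 1 + card {b\<in>N. E u b} + card R"
      using card_Un_le[of "{w}" "{b\<in>N. E u b}"] by simp
    finally show ?thesis by (simp add: degree_def neighbors_def)
  qed
  have "(\<Sum>u\<in>N. degree V E u) \<le> (\<Sum>u\<in>N. 1 + card {b\<in>N. E u b} + card R)"
    by (rule sum_mono) (rule degu)
  also have "\<dots> = d + (\<Sum>u\<in>N. card {b\<in>N. E u b}) + d * card R"
    by (simp only: sum.distrib sum_constant dN) simp
  also have "\<dots> \<le> d + (2*k-2)*d + d * card R" using sumN by simp
  finally have S: "(\<Sum>u\<in>N. degree V E u) \<le> d + (2*k-2)*d + d * card R" .
  have Sr: "(\<Sum>u\<in>N. real (degree V E u)) \<le> real d * (real (card V) + 2 * real k - 2 - real d)"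
  proof -
    have "(\<Sum>u\<in>N. real (degree V E u)) = real (\<Sum>u\<in>N. degree V E u)" by simp
    also have "\<dots> \<le> real (d + (2*k-2)*d + d * card R)" using S by linarith
    also have "\<dots> = real d * (real (card V) + 2 * real k - 2 - real d)"
    proof -
      obtain m where m: "card V = Suc d + m" using cV le_Suc_ex by blast
      have r: "card R = m" using cR m by simp
      have kk: "real (2*k-2) = 2*real k - 2" using assms(2) by (simp add: of_nat_diff)
      have "real (d + (2*k-2)*d + d * card R) = real d + real (2*k-2) * real d + real d * real m"
        using r by simp
      also have "\<dots> = real d * (real (card V) + 2 * real k - 2 - real d)"
        unfolding kk m by (simp add: algebra_simps)
      finally show ?thesis .
    qed
    finally show ?thesis .
  qed
  have dpos: "real d > 0" using assms(5) by (simp add: d_def)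
  have "(\<Sum>u\<in>N. real (degree V E u)) / real d \<le> real (card V) + 2 * real k - 2 - real d"
    using Sr dpos by (simp add: divide_le_eq mult.commute)
  then show ?thesis by (simp add: d_def N_def)
qed

end
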